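(* Let $a,b\in\mathbb{C}$ with $(a,b)\neq(1,0)$, and $\alpha,\bar\alpha,\beta,\bar\beta\in\mathbb{C}$ with $\alpha,\bar\alpha\neq0$ and $\beta\neq\bar\beta$. Consider extensions $0\to M_{\bar\alpha,\bar\beta}\to E\to M_{\alpha,\beta}\to0$ of $\mathcal{W}(a,b)$-modules, written as $E=\mathbb{C}[\partial]v_{\bar\alpha}\oplus\mathbb{C}[\partial]v_\alpha$ with $L_\lambda v_\alpha=(\partial+\alpha\lambda+\beta)v_\alpha+f(\partial,\lambda)v_{\bar\alpha}$, $W_\lambda v_\alpha=g(\partial,\lambda)v_{\bar\alpha}$. (0) If $\beta-\bar\beta+b\neq0$, every such extension is trivial. Now assume $\beta-\bar\beta+b=0$. Then every such extension is equivalent to one with $f=0$, and an extension with $f=0$ is nontrivial iff $g\neq0$. Moreover, letting $m$ denote the total degree of $g$, the nonzero $g$ that occur (with $f=0$) are exactly the nonzero scalar multiples of the following polynomials, under the stated conditions: (2) If $a\neq1$: (a) $m=0$: $\alpha-\bar\alpha=1-a$, $g=1$; (b) $m=1$: $\alpha-\bar\alpha=2-a$, $g=\partial-\frac{\bar\alpha}{1-a}\lambda+\frac{\bar\alpha b}{1-a}+\bar\beta$; (c) $m=2$: $\alpha=1$, $\bar\alpha=a-2$, $g=\partial^2-\frac{1+2\bar\alpha}{1-a}\partial\lambda-\frac{\bar\alpha}{1-a}\lambda^2+a_{10}\partial+a_{11}\lambda+a_{00}$ with $a_{10}=2\bar\beta+\frac{(1+2\bar\alpha)b}{1-a}$, $a_{11}=\frac{2b\bar\alpha}{1-a}-\frac{(1+2\bar\alpha)\bar\beta}{1-a}$,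 $a_{00}=\bar\beta^2+\frac{b\bar\beta(1+2\bar\alpha)}{1-a}-\frac{b^2\bar\alpha}{1-a}$; (d) $m=3$: $\alpha=a=\frac53$, $\bar\alpha=-\frac23$, $g=\partial^3+\frac32\partial^2\lambda-\frac32\partial\lambda^2-\lambda^3+a_{20}\partial^2+a_{21}\partial\lambda+a_{22}\lambda^2+a_{10}\partial+a_{11}\lambda+a_{00}$ with $a_{20}=3\bar\beta-\frac32b$, $a_{21}=3\bar\beta+3b$, $a_{22}=-\frac32\bar\beta+3b$, $a_{10}=3\bar\beta^2-3b\bar\beta-\frac32b^2$, $a_{11}=\frac32\bar\beta^2+3b\bar\beta-3b^2$, $a_{00}=\bar\beta^3-\frac32b\bar\beta^2-\frac32b^2\bar\beta+b^3$; and no other degrees occur. (3) If $a=1$: (a) $m=0$: $\alpha=\bar\alpha$, $g=1$; (b) $m=1$: $\alpha-\bar\alpha=1$, $g=\lambda-b$; (c) $m=2$: $\alpha-\bar\alpha=2$, $g=\partial\lambda-\bar\alpha\lambda^2-b\partial+(\bar\beta+2b\bar\alpha)\lambda-(b\bar\beta+b^2\bar\alpha)$; (d) $m=3$: $\alpha=1$, $\bar\alpha=-2$, $g=\partial^2\lambda+3\partial\lambda^2+2\lambda^3-b\partial^2+(2\bar\beta-6b)\partial\lambda+(3\bar\beta-6b)\lambda^2+(3b^2-2b\bar\beta)\partial+(\bar\beta^2-6b\bar\beta+6b^2)\lambda-\bar\beta^2b+3b^2\bar\beta-2b^3$; and no other degrees occur.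
   Context: A conformal module over a Lie conformal algebra $\mathcal{R}$ is a $\mathbb{C}[\partial]$-module $V$ with $\mathbb{C}$-linear maps $\mathcal{R}\otimes V\to V[\lambda]$, $a\otimes v\mapsto a_\lambda v$, such that $(\partial a)_\lambda v=-\lambda a_\lambda v$, $a_\lambda(\partial v)=(\partial+\lambda)a_\lambda v$, and $a_\lambda(b_\mu v)-b_\mu(a_\lambda v)=[a_\lambda b]_{\lambda+\mu}v$. The Lie conformal algebra $\mathcal{W}(a,b)$ is the free $\mathbb{C}[\partial]$-module on $L,W$ with $[L_\lambda L]=(\partial+2\lambda)L$, $[L_\lambda W]=(\partial+a\lambda+b)W$, $[W_\lambda W]=0$. For $(a,b)\neq(1,0)$ and $\alpha\neq0$, $M_{\alpha,\beta}=\mathbb{C}[\partial]v$ with $L_\lambda v=(\partial+\alpha\lambda+\beta)v$, $W_\lambda v=0$. Every extension of $M_{\alpha,\beta}$ by $M_{\bar\alpha,\bar\beta}$ can be written in the displayed form with $f,g\in\mathbb{C}[\partial,\lambda]$, where $\mathbb{C}[\partial]v_{\bar\alpha}\cong M_{\bar\alpha,\bar\beta}$ is a submodule. Equivalence of extensions means a module homomorphism between middle terms compatible with the identities on the end terms; trivial means equivalent to the direct sum extension. *)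

theory Defs
  imports "HOL-Computational_Algebra.Polynomial"
begin

text \<open>
  C[\<partial>] is represented by complex poly (variable \<partial>).
  C[\<partial>,\<lambda>] is represented by complex poly poly: the outer variable is \<lambda>,
  the coefficients are polynomials in \<partial>.
  An element r(\<partial>)L + s(\<partial>)W of W(a,b) is the pair (r,s).
  An element p(\<partial>)vbar + q(\<partial>)v of E is the pair (p,q), where vbar spans the
  submodule M_{alb,beb} and v maps to the generator of the quotient M_{al,be}.
  Elements of V[\<lambda>] (polynomials in \<lambda> with coefficients in V) are represented
  through their values at all complex numbers \<lambda> (injective since C is infinite):
  every identity in V[\<lambda>] or V[\<lambda>,\<mu>] is required for all complex \<lambda>, \<mu>.
\<close>

type_synonym cpoly = "complex poly"
type_synonym cpoly2 = "complex poly poly"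
type_synonym lca_elt = "cpoly \<times> cpoly"
type_synonym mod_elt = "cpoly \<times> cpoly"

definition shiftp :: "cpoly \<Rightarrow> complex \<Rightarrow> cpoly" where
  "shiftp p l = pcompose p [:l, 1:]"

definition eval2 :: "cpoly2 \<Rightarrow> complex \<Rightarrow> cpoly" where
  "eval2 f l = poly f [:l:]"

definition pD :: cpoly2 where "pD = [:[:0, 1:]:]"
definition pL :: cpoly2 where "pL = [:0, 1:]"
definition cc :: "complex \<Rightarrow> cpoly2" where "cc c = [:[:c:]:]"

definition eadd :: "mod_elt \<Rightarrow> mod_elt \<Rightarrow> mod_elt" where
  "eadd u w = (fst u + fst w, snd u + snd w)"
definition ediff :: "mod_elt \<Rightarrow> mod_elt \<Rightarrow> mod_elt" where
  "ediff u w = (fst u - fst w, snd u - snd w)"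
definition escale :: "cpoly \<Rightarrow> mod_elt \<Rightarrow> mod_elt" where
  "escale c u = (c * fst u, c * snd u)"

definition dR :: "lca_elt \<Rightarrow> lca_elt" where
  "dR x = ([:0, 1:] * fst x, [:0, 1:] * snd x)"

text \<open>The \<lambda>-bracket of W(a,b) at a value \<lambda> = l:
  [L_\<lambda> L] = (\<partial>+2\<lambda>)L, [L_\<lambda> W] = (\<partial>+a\<lambda>+b)W, [W_\<lambda> W] = 0, and
  [W_\<lambda> L] = -[L_{-\<lambda>-\<partial>} W] = ((a-1)\<partial>+a\<lambda>-b)W (skew-symmetry), extended by
  sesquilinearity [r(\<partial>)X_\<lambda> s(\<partial>)Y] = r(-\<lambda>) s(\<partial>+\<lambda>) [X_\<lambda> Y].\<close>
definition Wbracket :: "complex \<Rightarrow> complex \<Rightarrow> complex \<Rightarrow> lca_elt \<Rightarrow> lca_elt \<Rightarrow> lca_elt" where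
  "Wbracket a b l x y =
     (smult (poly (fst x) (-l)) (shiftp (fst y) l * [:2*l, 1:]),
      smult (poly (fst x) (-l)) (shiftp (snd y) l * [:a*l + b, 1:])
      + smult (poly (snd x) (-l)) (shiftp (fst y) l * [:a*l - b, a - 1:]))"

text \<open>The displayed action on E:
  L_\<lambda> vbar = (\<partial>+alb \<lambda>+beb) vbar, W_\<lambda> vbar = 0,
  L_\<lambda> v = (\<partial>+al \<lambda>+be) v + f(\<partial>,\<lambda>) vbar, W_\<lambda> v = g(\<partial>,\<lambda>) vbar,
  extended to E by X_\<lambda>(p(\<partial>)u) = p(\<partial>+\<lambda>) X_\<lambda> u and to W(a,b) by
  (r(\<partial>)X)_\<lambda> = r(-\<lambda>) X_\<lambda>.\<close>
definition actL :: "complex \<Rightarrow> complex \<Rightarrow> complex \<Rightarrow> complex \<Rightarrow> cpoly2 \<Rightarrow> complex \<Rightarrow> mod_elt \<Rightarrow> mod_elt" where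
  "actL al be alb beb f l u =
     (shiftp (fst u) l * [:beb + alb * l, 1:] + shiftp (snd u) l * eval2 f l,
      shiftp (snd u) l * [:be + al * l, 1:])"

definition actW :: "cpoly2 \<Rightarrow> complex \<Rightarrow> mod_elt \<Rightarrow> mod_elt" where
  "actW g l u = (shiftp (snd u) l * eval2 g l, 0)"

definition act :: "complex \<Rightarrow> complex \<Rightarrow> complex \<Rightarrow> complex \<Rightarrow> cpoly2 \<Rightarrow> cpoly2
                    \<Rightarrow> lca_elt \<Rightarrow> complex \<Rightarrow> mod_elt \<Rightarrow> mod_elt" where
  "act al be alb beb f g x l u =
     eadd (escale [:poly (fst x) (-l):] (actL al be alb beb f l u))
          (escale [:poly (snd x) (-l):] (actW g l u))"

definition is_ext_module :: "complex \<Rightarrow> complex \<Rightarrow> complex \<Rightarrow> complex \<Rightarrow> complex \<Rightarrow> complex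
                              \<Rightarrow> cpoly2 \<Rightarrow> cpoly2 \<Rightarrow> bool" where
  "is_ext_module a b al be alb beb f g \<longleftrightarrow>
     (\<forall>x l u. act al be alb beb f g (dR x) l u = escale [:-l:] (act al be alb beb f g x l u)) \<and>
     (\<forall>x l u. act al be alb beb f g x l (escale [:0, 1:] u)
               = escale [:l, 1:] (act al be alb beb f g x l u)) \<and>
     (\<forall>x y l m u. ediff (act al be alb beb f g x l (act al be alb beb f g y m u))
                        (act al be alb beb f g y m (act al be alb beb f g x l u))
                 = act al be alb beb f g (Wbracket a b l x y) (l + m) u)"

text \<open>Equivalence of the extension given by (f,g) with the one given by (f',g'):
  a homomorphism of conformal modules (C[\<partial>]-linear, commuting with all \<lambda>-actions)
  between the middle terms which is the identity on the submodule C[\<partial>]vbar and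
  induces the identity on the quotient.\<close>
definition ext_equiv :: "complex \<Rightarrow> complex \<Rightarrow> complex \<Rightarrow> complex
                         \<Rightarrow> cpoly2 \<Rightarrow> cpoly2 \<Rightarrow> cpoly2 \<Rightarrow> cpoly2 \<Rightarrow> bool" where
  "ext_equiv al be alb beb f g f' g' \<longleftrightarrow>
     (\<exists>\<phi> :: mod_elt \<Rightarrow> mod_elt.
        (\<forall>u w. \<phi> (eadd u w) = eadd (\<phi> u) (\<phi> w)) \<and>
        (\<forall>c u. \<phi> (escale c u) = escale c (\<phi> u)) \<and>
        (\<forall>p. \<phi> (p, 0) = (p, 0)) \<and>
        (\<forall>u. snd (\<phi> u) = snd u) \<and>
        (\<forall>x l u. \<phi> (act al be alb beb f g x l u) = act al be alb beb f' g' x l (\<phi> u)))"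

definition ext_trivial :: "complex \<Rightarrow> complex \<Rightarrow> complex \<Rightarrow> complex \<Rightarrow> cpoly2 \<Rightarrow> cpoly2 \<Rightarrow> bool" where
  "ext_trivial al be alb beb f g \<longleftrightarrow> ext_equiv al be alb beb f g 0 0"

definition g2b :: "complex \<Rightarrow> complex \<Rightarrow> complex \<Rightarrow> complex \<Rightarrow> cpoly2" where
  "g2b a b alb beb = pD - cc (alb / (1 - a)) * pL + cc (alb * b / (1 - a) + beb)"

definition g2c :: "complex \<Rightarrow> complex \<Rightarrow> complex \<Rightarrow> complex \<Rightarrow> cpoly2" where
  "g2c a b alb beb =
     pD ^ 2 - cc ((1 + 2 * alb) / (1 - a)) * pD * pL - cc (alb / (1 - a)) * pL ^ 2
     + cc (2 * beb + (1 + 2 * alb) * b / (1 - a)) * pD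
     + cc (2 * b * alb / (1 - a) - (1 + 2 * alb) * beb / (1 - a)) * pL
     + cc (beb ^ 2 + b * beb * (1 + 2 * alb) / (1 - a) - b ^ 2 * alb / (1 - a))"

definition g2d :: "complex \<Rightarrow> complex \<Rightarrow> cpoly2" where
  "g2d b beb =
     pD ^ 3 + cc (3/2) * pD ^ 2 * pL - cc (3/2) * pD * pL ^ 2 - pL ^ 3
     + cc (3 * beb - 3/2 * b) * pD ^ 2 + cc (3 * beb + 3 * b) * pD * pL
     + cc (-(3/2) * beb + 3 * b) * pL ^ 2
     + cc (3 * beb ^ 2 - 3 * b * beb - 3/2 * b ^ 2) * pD
     + cc (3/2 * beb ^ 2 + 3 * b * beb - 3 * b ^ 2) * pL
     + cc (beb ^ 3 - 3/2 * b * beb ^ 2 - 3/2 * b ^ 2 * beb + b ^ 3)"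

definition g3b :: "complex \<Rightarrow> cpoly2" where
  "g3b b = pL - cc b"

definition g3c :: "complex \<Rightarrow> complex \<Rightarrow> complex \<Rightarrow> cpoly2" where
  "g3c b alb beb =
     pD * pL - cc alb * pL ^ 2 - cc b * pD + cc (beb + 2 * b * alb) * pL
     - cc (b * beb + b ^ 2 * alb)"

definition g3d :: "complex \<Rightarrow> complex \<Rightarrow> cpoly2" where
  "g3d b beb =
     pD ^ 2 * pL + 3 * pD * pL ^ 2 + 2 * pL ^ 3 - cc b * pD ^ 2
     + cc (2 * beb - 6 * b) * pD * pL + cc (3 * beb - 6 * b) * pL ^ 2
     + cc (3 * b ^ 2 - 2 * b * beb) * pD + cc (beb ^ 2 - 6 * b * beb + 6 * b ^ 2) * pL
     - cc (beb ^ 2 * b - 3 * b ^ 2 * beb + 2 * b ^ 3)"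

end

theory Submission
  imports Defs
begin



definition Gv :: "cpoly2 \<Rightarrow> complex \<Rightarrow> complex \<Rightarrow> complex" where
  "Gv g l x = poly (eval2 g l) x"

lemma poly_shiftp[simp]: "poly (shiftp p l) x = poly p (x + l)"
  by (simp add: shiftp_def poly_pcompose algebra_simps)

lemma eval2_add[simp]: "eval2 (p + q) l = eval2 p l + eval2 q l" by (simp add: eval2_def)
lemma eval2_diff[simp]: "eval2 (p - q) l = eval2 p l - eval2 q l" by (simp add: eval2_def)
lemma eval2_mult[simp]: "eval2 (p * q) l = eval2 p l * eval2 q l" by (simp add: eval2_def)
lemma eval2_minus[simp]: "eval2 (- p) l = - eval2 p l" by (simp add: eval2_def)
lemma eval2_power[simp]: "eval2 (p ^ n) l = eval2 p l ^ n" by (simp add: eval2_def poly_power)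
lemma eval2_0[simp]: "eval2 0 l = 0" by (simp add: eval2_def)
lemma eval2_cc[simp]: "eval2 (cc c) l = [:c:]" by (simp add: eval2_def cc_def)
lemma eval2_pD[simp]: "eval2 pD l = [:0,1:]" by (simp add: eval2_def pD_def)
lemma eval2_pL[simp]: "eval2 pL l = [:l:]" by (simp add: eval2_def pL_def)
lemma eval2_numeral[simp]: "eval2 (numeral k) l = numeral k" by (simp add: eval2_def)
lemma eval2_one[simp]: "eval2 1 l = 1" by (simp add: eval2_def)

lemma Gv_add[simp]: "Gv (p + q) l x = Gv p l x + Gv q l x" by (simp add: Gv_def)
lemma Gv_diff[simp]: "Gv (p - q) l x = Gv p l x - Gv q l x" by (simp add: Gv_def)
lemma Gv_mult[simp]: "Gv (p * q) l x = Gv p l x * Gv q l x" by (simp add: Gv_def)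
lemma Gv_power[simp]: "Gv (p ^ n) l x = Gv p l x ^ n" by (simp add: Gv_def poly_power)
lemma Gv_0[simp]: "Gv 0 l x = 0" by (simp add: Gv_def)
lemma Gv_cc[simp]: "Gv (cc c) l x = c" by (simp add: Gv_def)
lemma Gv_pD[simp]: "Gv pD l x = x" by (simp add: Gv_def)
lemma Gv_pL[simp]: "Gv pL l x = l" by (simp add: Gv_def)
lemma Gv_numeral[simp]: "Gv (numeral k) l x = numeral k" by (simp add: Gv_def)

lemma poly_act_fst[simp]:
  "poly (fst (act al be alb beb f g x l u)) y =
     poly (fst x) (-l) * (poly (fst u) (y + l) * (y + alb * l + beb) + poly (snd u) (y + l) * Gv f l y)
     + poly (snd x) (-l) * (poly (snd u) (y + l) * Gv g l y)"
  by (simp add: act_def eadd_def escale_def actL_def actW_def Gv_def algebra_simps)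

lemma poly_act_snd[simp]:
  "poly (snd (act al be alb beb f g x l u)) y =
     poly (fst x) (-l) * (poly (snd u) (y + l) * (y + al * l + be))"
  by (simp add: act_def eadd_def escale_def actL_def actW_def Gv_def algebra_simps)

lemma fst_ediff[simp]: "fst (ediff u w) = fst u - fst w" by (simp add: ediff_def)
lemma snd_ediff[simp]: "snd (ediff u w) = snd u - snd w" by (simp add: ediff_def)
lemma fst_eadd[simp]: "fst (eadd u w) = fst u + fst w" by (simp add: eadd_def)
lemma snd_eadd[simp]: "snd (eadd u w) = snd u + snd w" by (simp add: eadd_def)
lemma fst_escale[simp]: "fst (escale c u) = c * fst u" by (simp add: escale_def)
lemma snd_escale[simp]: "snd (escale c u) = c * snd u" by (simp add: escale_def)
lemma fst_dR[simp]: "fst (dR x) = [:0,1:] * fst x" by (simp add: dR_def)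
lemma snd_dR[simp]: "snd (dR x) = [:0,1:] * snd x" by (simp add: dR_def)

lemma poly_Wb_fst[simp]: "poly (fst (Wbracket a b l x y)) z =
   poly (fst x) (-l) * poly (fst y) (z + l) * (z + 2*l)"
  by (simp add: Wbracket_def algebra_simps)
lemma poly_Wb_snd[simp]: "poly (snd (Wbracket a b l x y)) z =
   poly (fst x) (-l) * poly (snd y) (z + l) * (z + a * l + b)
   + poly (snd x) (-l) * poly (fst y) (z + l) * ((a - 1) * z + a * l - b)"
  by (simp add: Wbracket_def algebra_simps)

lemma pair_poly_eq: "(u::mod_elt) = w \<longleftrightarrow> (\<forall>y. poly (fst u) y = poly (fst w) y) \<and> (\<forall>y. poly (snd u) y = poly (snd w) y)"
  by (simp add: prod_eq_iff poly_eq_poly_eq_iff[symmetric] fun_eq_iff)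

definition WC where "WC a b al be alb beb g \<longleftrightarrow>
  (\<forall>x l m. (x + alb*l + beb) * Gv g m (x + l) - (x + m + al*l + be) * Gv g m x
          = ((a - 1)*l - m + b) * Gv g (l + m) x)"

definition LC where "LC al be alb beb f \<longleftrightarrow>
  (\<forall>x l m. (x + l + al*m + be) * Gv f l x + (x + alb*l + beb) * Gv f m (x + l)
           - (x + m + al*l + be) * Gv f m x - (x + alb*m + beb) * Gv f l (x + m)
          = (l - m) * Gv f (l + m) x)"

lemma char_imp:
  assumes "is_ext_module a b al be alb beb f g"
  shows "LC al be alb beb f \<and> WC a b al be alb beb g"
proof -
  have ax: "\<And>x y l m u. ediff (act al be alb beb f g x l (act al be alb beb f g y m u))
                        (act al be alb beb f g y m (act al be alb beb f g x l u))
                 = act al be alb beb f g (Wbracket a b l x y) (l + m) u"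
    using assms unfolding is_ext_module_def by blast
  have "LC al be alb beb f"
    unfolding LC_def
  proof (intro allI)
    fix x l m
    have "\<forall>y. poly (fst (ediff (act al be alb beb f g (1,0) l (act al be alb beb f g (1,0) m (0,1)))
                        (act al be alb beb f g (1,0) m (act al be alb beb f g (1,0) l (0,1))))) y
          = poly (fst (act al be alb beb f g (Wbracket a b l (1,0) (1,0)) (l + m) (0,1))) y"
      using ax[of "(1,0)" l "(1,0)" m "(0,1)"] by (simp add: pair_poly_eq)
    from spec[OF this, of x] show "(x + l + al*m + be) * Gv f l x + (x + alb*l + beb) * Gv f m (x + l)
           - (x + m + al*l + be) * Gv f m x - (x + alb*m + beb) * Gv f l (x + m)
          = (l - m) * Gv f (l + m) x"
      by (simp add: algebra_simps)
  qed
  moreover have "WC a b al be alb beb g"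
    unfolding WC_def
  proof (intro allI)
    fix x l m
    have "\<forall>y. poly (fst (ediff (act al be alb beb f g (1,0) l (act al be alb beb f g (0,1) m (0,1)))
                        (act al be alb beb f g (0,1) m (act al be alb beb f g (1,0) l (0,1))))) y
          = poly (fst (act al be alb beb f g (Wbracket a b l (1,0) (0,1)) (l + m) (0,1))) y"
      using ax[of "(1,0)" l "(0,1)" m "(0,1)"] by (simp add: pair_poly_eq)
    from spec[OF this, of x] show "(x + alb*l + beb) * Gv g m (x + l) - (x + m + al*l + be) * Gv g m x
          = ((a - 1)*l - m + b) * Gv g (l + m) x"
      by (simp add: algebra_simps)
  qed
  ultimately show ?thesis by blast
qed




lemma char_rev:
  assumes LC: "LC al be alb beb f" and WC: "WC a b al be alb beb g"
  shows "is_ext_module a b al be alb beb f g"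
  unfolding is_ext_module_def
proof (intro conjI allI)
  fix x l u
  show "act al be alb beb f g (dR x) l u = escale [:- l:] (act al be alb beb f g x l u)"
    by (simp add: pair_poly_eq algebra_simps)
next
  fix x l u
  show "act al be alb beb f g x l (escale [:0, 1:] u) = escale [:l, 1:] (act al be alb beb f g x l u)"
    by (simp add: pair_poly_eq algebra_simps)
next
  fix x y l m u
  show "ediff (act al be alb beb f g x l (act al be alb beb f g y m u))
                        (act al be alb beb f g y m (act al be alb beb f g x l u))
                 = act al be alb beb f g (Wbracket a b l x y) (l + m) u"
  proof (simp only: pair_poly_eq, intro conjI allI)
    fix z
    have L1: "(z + l + al*m + be) * Gv f l z + (z + alb*l + beb) * Gv f m (z + l)
           - (z + m + al*l + be) * Gv f m z - (z + alb*m + beb) * Gv f l (z + m)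
          = (l - m) * Gv f (l + m) z" using LC unfolding LC_def by blast
    have W1: "(z + alb*l + beb) * Gv g m (z + l) - (z + m + al*l + be) * Gv g m z
          = ((a - 1)*l - m + b) * Gv g (l + m) z" using WC unfolding WC_def by blast
    have W2: "(z + alb*m + beb) * Gv g l (z + m) - (z + l + al*m + be) * Gv g l z
          = ((a - 1)*m - l + b) * Gv g (m + l) z" using WC unfolding WC_def by blast
    show "poly (fst (ediff (act al be alb beb f g x l (act al be alb beb f g y m u))
                        (act al be alb beb f g y m (act al be alb beb f g x l u)))) z
        = poly (fst (act al be alb beb f g (Wbracket a b l x y) (l + m) u)) z"
      using L1 W1 W2 apply (simp add: add.commute[of m l] add.left_commute[of m l] add.assoc)
      by algebra
  next
    fix z
    show "poly (snd (ediff (act al be alb beb f g x l (act al be alb beb f g y m u))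
                        (act al be alb beb f g y m (act al be alb beb f g x l u)))) z
        = poly (snd (act al be alb beb f g (Wbracket a b l x y) (l + m) u)) z"
      by (simp add: algebra_simps)
  qed
qed



lemma char_iff: "is_ext_module a b al be alb beb f g \<longleftrightarrow> LC al be alb beb f \<and> WC a b al be alb beb g"
  using char_imp char_rev by blast

lemma LC_0: "LC al be alb beb 0" by (simp add: LC_def)

lemma cobound:
  assumes LC: "LC al be alb beb f" and bene: "be \<noteq> beb"
  shows "ext_equiv al be alb beb f g 0 g"
proof -
  define p0 where "p0 = smult (1/(beb - be)) (eval2 f 0)"
  have key: "Gv f l x = (x + alb*l + beb) * poly p0 (x + l) - (x + al*l + be) * poly p0 x" for l x
  proof -
    have "(x + l + al*0 + be) * Gv f l x + (x + alb*l + beb) * Gv f 0 (x + l)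
           - (x + 0 + al*l + be) * Gv f 0 x - (x + alb*0 + beb) * Gv f l (x + 0)
          = (l - 0) * Gv f (l + 0) x" using LC unfolding LC_def by blast
    then have "(be - beb) * Gv f l x = (x + al*l + be) * Gv f 0 x - (x + alb*l + beb) * Gv f 0 (x + l)"
      by (simp add: algebra_simps)
    moreover have nz: "beb - be \<noteq> 0" using bene by simp
    moreover have pv: "(beb - be) * poly p0 z = Gv f 0 z" for z using nz by (simp add: p0_def Gv_def)
    moreover have "(beb - be) * ((x + alb*l + beb) * poly p0 (x + l) - (x + al*l + be) * poly p0 x)
       = (x + alb*l + beb) * ((beb - be) * poly p0 (x + l)) - (x + al*l + be) * ((beb - be) * poly p0 x)"
      by (simp add: algebra_simps)
    ultimately have "(beb - be) * Gv f l x = (beb - be) * ((x + alb*l + beb) * poly p0 (x + l) - (x + al*l + be) * poly p0 x)"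
      by (simp only: pv) algebra
    then show ?thesis using nz by simp
  qed
  define \<phi> where "\<phi> = (\<lambda>u::mod_elt. (fst u + snd u * p0, snd u))"
  show ?thesis unfolding ext_equiv_def
  proof (rule exI[of _ \<phi>], intro conjI allI)
    fix u w show "\<phi> (eadd u w) = eadd (\<phi> u) (\<phi> w)" by (simp add: \<phi>_def eadd_def algebra_simps)
  next
    fix c u show "\<phi> (escale c u) = escale c (\<phi> u)" by (simp add: \<phi>_def escale_def algebra_simps)
  next
    fix p show "\<phi> (p, 0) = (p, 0)" by (simp add: \<phi>_def)
  next
    fix u show "snd (\<phi> u) = snd u" by (simp add: \<phi>_def)
  next
    fix x l u
    show "\<phi> (act al be alb beb f g x l u) = act al be alb beb 0 g x l (\<phi> u)"
      unfolding pair_poly_eq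
    proof (intro conjI allI)
      fix y
      show "poly (fst (\<phi> (act al be alb beb f g x l u))) y = poly (fst (act al be alb beb 0 g x l (\<phi> u))) y"
        using key[of l y] apply (simp add: \<phi>_def algebra_simps) by algebra
    next
      fix y
      show "poly (snd (\<phi> (act al be alb beb f g x l u))) y = poly (snd (act al be alb beb 0 g x l (\<phi> u))) y"
        by (simp add: \<phi>_def algebra_simps)
    qed
  qed
qed




lemma Gv_map: "Gv g l x = poly (map_poly (\<lambda>p. poly p x) g) l"
  unfolding Gv_def eval2_def
  by (induction g) (simp_all add: map_poly_pCons)

lemma g_zero_all: assumes "\<And>l x. Gv g l x = 0" shows "g = 0"
proof -
  have "map_poly (\<lambda>p. poly p x) g = 0" for x
    using assms by (simp add: Gv_map poly_all_0_iff_0[symmetric])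
  then have "poly (coeff g j) x = 0" for j x
    by (metis coeff_0 coeff_map_poly poly_0)
  then have "coeff g j = 0" for j by (simp add: poly_all_0_iff_0[symmetric])
  then show ?thesis by (simp add: poly_eq_iff)
qed

lemma g_zero_cofinite: assumes "\<And>l x. l \<noteq> lz \<Longrightarrow> Gv g l x = 0" shows "g = 0"
proof -
  have "map_poly (\<lambda>p. poly p x) g = 0" for x
  proof (rule ccontr)
    assume ne: "map_poly (\<lambda>p. poly p x) g \<noteq> 0"
    have "UNIV - {lz} \<subseteq> {l. poly (map_poly (\<lambda>p. poly p x) g) l = 0}"
      using assms by (auto simp: Gv_map)
    moreover have "infinite (UNIV - {lz} :: complex set)"
      by (simp add: infinite_UNIV_char_0)
    ultimately show False using poly_roots_finite[OF ne] finite_subset by blast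
  qed
  then have "poly (coeff g j) x = 0" for j x
    by (metis coeff_0 coeff_map_poly poly_0)
  then have "coeff g j = 0" for j by (simp add: poly_all_0_iff_0[symmetric])
  then show ?thesis by (simp add: poly_eq_iff)
qed

lemma g_zero_k:
  assumes ab: "(a, b) \<noteq> (1::complex, 0)" and k: "\<And>l x. ((a - 1) * l + b) * Gv g l x = 0"
  shows "g = 0"
proof (cases "a = 1")
  case True
  then have "b \<noteq> 0" using ab by auto
  then show ?thesis using k True by (intro g_zero_all) simp
next
  case False
  show ?thesis
  proof (rule g_zero_cofinite[where lz = "- b / (a - 1)"])
    fix l x assume "l \<noteq> - b / (a - 1)"
    then have "(a - 1) * l + b \<noteq> 0" using False by (auto simp: field_simps)
    then show "Gv g l x = 0" using k[of l x] by simp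
  qed
qed

lemma topc:
  fixes A B :: "'a::comm_semiring_1 poly"
  assumes "degree A \<le> d" "degree B \<le> e"
  shows "coeff (A * B) (d + e) = coeff A d * coeff B e"
proof -
  have "coeff (A * B) (d + e) = (\<Sum>i\<le>d+e. coeff A i * coeff B (d + e - i))" by (rule coeff_mult)
  also have "\<dots> = (\<Sum>i\<le>d+e. if i = d then coeff A d * coeff B e else 0)"
  proof (rule sum.cong)
    fix i assume "i \<in> {..d+e}"
    show "coeff A i * coeff B (d + e - i) = (if i = d then coeff A d * coeff B e else 0)"
    proof (cases "i = d")
      case False
      then have "d < i \<or> e < d + e - i" by auto
      then show ?thesis using assms False by (auto simp: coeff_eq_0)
    qed simp
  qed simp
  also have "\<dots> = coeff A d * coeff B e" by simp
  finally show ?thesis .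
qed

lemma coeff_scale: "coeff (p \<circ>\<^sub>p [:0, c:]) k = c ^ k * coeff p k" for p :: "complex poly"
proof (induction p arbitrary: k)
  case 0 then show ?case by simp
next
  case (pCons a p)
  show ?case
  proof (cases k)
    case 0 then show ?thesis by (auto simp add: pcompose_pCons coeff_pCons)
  next
    case (Suc j) then show ?thesis using pCons(2)[of j] by (simp add: pcompose_pCons)
  qed
qed

lemma degree_scale: "degree (p \<circ>\<^sub>p [:0, c:]) \<le> degree p"
  using degree_pcompose_le[of p "[:0, c:]"] by (cases "c = 0") auto

lemma degree_lin: "degree [:a0, a1:] \<le> 1" by simp

lemma top4g:
  fixes A B C D :: "complex poly"
  assumes "degree A \<le> 1" "degree B \<le> 1" "degree C \<le> 1" "degree D \<le> n"
  shows "coeff (A * B * C * D) (3 + n) = coeff A 1 * coeff B 1 * coeff C 1 * coeff D n"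
proof -
  have d2: "degree (A * B) \<le> 1 + 1"
    by (rule order.trans[OF degree_mult_le]) (use assms in \<open>simp add: add_mono\<close>)
  have c2: "coeff (A * B) (1+1) = coeff A 1 * coeff B 1"
    by (rule topc) (use assms in auto)
  have d3: "degree (A * B * C) \<le> 2 + 1"
    by (rule order.trans[OF degree_mult_le]) (use d2 assms in \<open>simp add: add_mono\<close>)
  have c3: "coeff (A * B * C) (2+1) = coeff A 1 * coeff B 1 * coeff C 1"
    using topc[of "A * B" 2 C 1] d2 c2 assms by (simp add: numeral_2_eq_2 numeral_3_eq_3)
  have "coeff (A * B * C * D) (3 + n) = coeff (A * B * C) 3 * coeff D n"
    by (rule topc) (use d3 assms in auto)
  then show ?thesis using c3 by (simp add: numeral_2_eq_2 numeral_3_eq_3)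
qed

lemma top3g:
  fixes A B D :: "complex poly"
  assumes "degree A \<le> 1" "degree B \<le> 1" "degree D \<le> n"
  shows "coeff (A * B * D) (2 + n) = coeff A 1 * coeff B 1 * coeff D n"
proof -
  have d2: "degree (A * B) \<le> 1 + 1"
    by (rule order.trans[OF degree_mult_le]) (use assms in \<open>simp add: add_mono\<close>)
  have c2: "coeff (A * B) (1+1) = coeff A 1 * coeff B 1"
    by (rule topc) (use assms in auto)
  have "coeff (A * B * D) (2 + n) = coeff (A * B) 2 * coeff D n"
    by (rule topc) (use d2 assms in auto)
  then show ?thesis using c2 by (simp add: numeral_2_eq_2 numeral_3_eq_3)
qed




definition kk :: "complex \<Rightarrow> complex \<Rightarrow> complex \<Rightarrow> complex" where "kk a b l = (a - 1) * l + b"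
definition NN :: "complex \<Rightarrow> complex \<Rightarrow> complex \<Rightarrow> complex \<Rightarrow> (complex \<Rightarrow> complex) \<Rightarrow> complex \<Rightarrow> complex \<Rightarrow> complex" where
  "NN al be alb beb H x l = (x + alb*l + beb) * H (x + l) - (x + al*l + be) * H x"

definition FF where "FF a b al be alb beb H x l m =
   kk a b (l+m) * ((x + alb*l + beb) * NN al be alb beb H (x+l) m - (x + m + al*l + be) * NN al be alb beb H x m)
   - kk a b m * ((a - 1)*l - m + b) * NN al be alb beb H x (l+m)"

definition FF1 where "FF1 a b al be alb beb H x l m =
   (x + alb*l + beb) * NN al be alb beb H (x+l) m - (x + m + al*l + be) * NN al be alb beb H x m
   - ((a - 1)*l - m + b) * NN al be alb beb H x (l+m)"

lemma Nrel:
  assumes "WC a b al be alb beb g"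
  shows "kk a b l * Gv g l x = NN al be alb beb (poly (eval2 g 0)) x l"
proof -
  have "(x + alb*l + beb) * Gv g 0 (x + l) - (x + 0 + al*l + be) * Gv g 0 x
          = ((a - 1)*l - 0 + b) * Gv g (l + 0) x" using assms unfolding WC_def by blast
  then show ?thesis by (simp add: kk_def NN_def Gv_def)
qed

lemma Fid:
  assumes "WC a b al be alb beb g"
  shows "FF a b al be alb beb (poly (eval2 g 0)) x l m = 0"
proof -
  have W: "(x + alb*l + beb) * Gv g m (x + l) - (x + m + al*l + be) * Gv g m x
          = ((a - 1)*l - m + b) * Gv g (l + m) x" using assms unfolding WC_def by blast
  note N1 = Nrel[OF assms, of m "x+l"] and N2 = Nrel[OF assms, of m x] and N3 = Nrel[OF assms, of "l+m" x]
  show ?thesis unfolding FF_def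
    using W N1 N2 N3 by algebra
qed

lemma Fid1:
  assumes "WC a b al be alb beb g" and "a = 1" and "b \<noteq> 0"
  shows "FF1 a b al be alb beb (poly (eval2 g 0)) x l m = 0"
proof -
  have W: "(x + alb*l + beb) * Gv g m (x + l) - (x + m + al*l + be) * Gv g m x
          = ((a - 1)*l - m + b) * Gv g (l + m) x" using assms unfolding WC_def by blast
  note N1 = Nrel[OF assms(1), of m "x+l"] and N2 = Nrel[OF assms(1), of m x] and N3 = Nrel[OF assms(1), of "l+m" x]
  have "b * FF1 a b al be alb beb (poly (eval2 g 0)) x l m = 0" unfolding FF1_def
    using W N1 N2 N3 assms(2) unfolding kk_def by algebra
  then show ?thesis using assms(3) by simp
qed

definition TT where "TT a al alb (n::nat) p q =
  (a-1)*(q+1)*(p+alb*q)*(p+q+alb)*(p+q+1)^n - (a-1)*(q+1)*(p+alb*q)*(p+q+al)*(p+q)^n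
  - (a-1)*(q+1)*(p+1+al*q)*(p+alb)*(p+1)^n + (a-1)*(q+1)*(p+1+al*q)*(p+al)*p^n
  - (a-1)*((a-1)*q-1)*(p+alb*(q+1))*(p+q+1)^n + (a-1)*((a-1)*q-1)*(p+al*(q+1))*p^n"

definition TT1 where "TT1 al alb (n::nat) p q =
  (p+alb*q)*(p+q+alb)*(p+q+1)^n - (p+alb*q)*(p+q+al)*(p+q)^n
  - (p+1+al*q)*(p+alb)*(p+1)^n + (p+1+al*q)*(p+al)*p^n
  + (p+alb*(q+1))*(p+q+1)^n - (p+al*(q+1))*p^n"

lemma poly_scale: "poly (h \<circ>\<^sub>p [:0, c:]) t = poly h (c * t)"
  by (simp add: poly_pcompose algebra_simps)

lemma top_main:
  fixes h :: "complex poly"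
  assumes F: "\<And>x l m. FF a b al be alb beb (poly h) x l m = 0"
  shows "lead_coeff h * TT a al alb (degree h) p q = 0"
proof -
  define n where "n = degree h"
  define S where "S c = h \<circ>\<^sub>p [:0, c:]" for c
  define P where "P =
     [:b,(a-1)*(q+1):] * [:beb, p+alb*q:] * [:beb, p+q+alb:] * S (p+q+1)
   - [:b,(a-1)*(q+1):] * [:beb, p+alb*q:] * [:be, p+q+al:] * S (p+q)
   - [:b,(a-1)*(q+1):] * [:be, p+1+al*q:] * [:beb, p+alb:] * S (p+1)
   + [:b,(a-1)*(q+1):] * [:be, p+1+al*q:] * [:be, p+al:] * S p
   - [:b,a-1:] * [:b,(a-1)*q-1:] * [:beb, p+alb*(q+1):] * S (p+q+1)
   + [:b,a-1:] * [:b,(a-1)*q-1:] * [:be, p+al*(q+1):] * S p"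
  have ev: "poly P t = FF a b al be alb beb (poly h) (p*t) (q*t) t" for t
  proof -
    have e1: "p*t + q*t + t = (p+q+1)*t" "p*t+q*t = (p+q)*t" "p*t + t = (p+1)*t" "p * t + (q * t + t) = (p+q+1)*t"
      by (simp_all add: algebra_simps)
    show ?thesis unfolding P_def S_def FF_def NN_def kk_def
      by (simp add: poly_scale e1 add.assoc[symmetric]) (simp add: algebra_simps)
  qed
  have "P = 0" using ev F by (simp add: poly_all_0_iff_0[symmetric])
  then have "coeff P (3 + n) = 0" by simp
  moreover have dS: "degree (S c) \<le> n" for c unfolding S_def n_def by (rule degree_scale)
  moreover have cS: "coeff (S c) n = c ^ n * lead_coeff h" for c unfolding S_def n_def by (rule coeff_scale)
  ultimately have "0 = coeff P (3 + n)" by simp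
  also have "\<dots> = lead_coeff h * TT a al alb n p q"
    unfolding P_def coeff_add coeff_diff top4g[OF degree_lin degree_lin degree_lin dS]
    by (simp add: cS TT_def algebra_simps)
  finally show ?thesis by (simp add: n_def)
qed

lemma top_main1:
  fixes h :: "complex poly"
  assumes F: "\<And>x l m. FF1 1 b al be alb beb (poly h) x l m = 0"
  shows "lead_coeff h * TT1 al alb (degree h) p q = 0"
proof -
  define n where "n = degree h"
  define S where "S c = h \<circ>\<^sub>p [:0, c:]" for c
  define P where "P =
     [:beb, p+alb*q:] * [:beb, p+q+alb:] * S (p+q+1)
   - [:beb, p+alb*q:] * [:be, p+q+al:] * S (p+q)
   - [:be, p+1+al*q:] * [:beb, p+alb:] * S (p+1)
   + [:be, p+1+al*q:] * [:be, p+al:] * S p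
   - [:b,-1:] * [:beb, p+alb*(q+1):] * S (p+q+1)
   + [:b,-1:] * [:be, p+al*(q+1):] * S p"
  have ev: "poly P t = FF1 1 b al be alb beb (poly h) (p*t) (q*t) t" for t
  proof -
    have e1: "p*t + q*t + t = (p+q+1)*t" "p*t+q*t = (p+q)*t" "p*t + t = (p+1)*t" "p * t + (q * t + t) = (p+q+1)*t"
      by (simp_all add: algebra_simps)
    show ?thesis unfolding P_def S_def FF1_def NN_def
      by (simp add: poly_scale e1 add.assoc[symmetric]) (simp add: algebra_simps)
  qed
  have "P = 0" using ev F by (simp add: poly_all_0_iff_0[symmetric])
  then have "coeff P (2 + n) = 0" by simp
  moreover have dS: "degree (S c) \<le> n" for c unfolding S_def n_def by (rule degree_scale)
  moreover have cS: "coeff (S c) n = c ^ n * lead_coeff h" for c unfolding S_def n_def by (rule coeff_scale)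
  ultimately have "0 = coeff P (2 + n)" by simp
  also have "\<dots> = lead_coeff h * TT1 al alb n p q"
    unfolding P_def coeff_add coeff_diff top3g[OF degree_lin degree_lin dS]
    by (simp add: cS TT1_def algebra_simps)
  finally show ?thesis by (simp add: n_def)
qed




lemma C2: "2 * (of_nat (n choose 2)::complex) = of_nat n * (of_nat n - 1)"
proof (induction n)
  case 0 then show ?case by simp
next
  case (Suc n)
  have "Suc n choose 2 = n + (n choose 2)" by (simp add: numeral_2_eq_2)
  then show ?case using Suc by (simp add: algebra_simps)
qed

lemma C3: "6 * (of_nat (n choose 3)::complex) = of_nat n * (of_nat n - 1) * (of_nat n - 2)"
proof (induction n)
  case 0 then show ?case by simp
next
  case (Suc n)
  have "Suc n choose 3 = (n choose 2) + (n choose 3)" by (simp add: numeral_3_eq_3 numeral_2_eq_2)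
  then have "(of_nat (Suc n choose 3)::complex) = of_nat (n choose 2) + of_nat (n choose 3)" by simp
  then show ?case using Suc.IH C2[of n] by simp algebra
qed

lemma Xpow_coeff: "j < k \<Longrightarrow> coeff ([:0,1:]^k * A) j = 0"
proof (induction k arbitrary: j)
  case 0 then show ?case by simp
next
  case (Suc k)
  have e: "[:0,1:]^Suc k * A = pCons 0 ([:0,1:]^k * A)" by (simp add: mult.assoc)
  show ?case
  proof (cases j)
    case 0 then show ?thesis by (simp add: e)
  next
    case (Suc i) then show ?thesis using Suc.IH[of i] Suc.prems by (simp add: e)
  qed
qed

lemma coeff_lin1: "coeff ([:c,1:] * A) (Suc j) = c * coeff A (Suc j) + coeff A j" for A :: "complex poly"
  by simp
lemma coeff_X1: "coeff ([:0,1:] * A) (Suc j) = coeff A j" for A :: "complex poly"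
  by simp
lemma coeff_gen1: "coeff ([:c,d:] * A) (Suc j) = c * coeff A (Suc j) + d * coeff A j" for A :: "complex poly"
  by simp

lemma cpow: "i \<le> n \<Longrightarrow> coeff ([:1,1:]^n :: complex poly) i = of_nat (n choose i)"
  by (simp add: coeff_linear_poly_power)

lemma roots_zero:
  fixes P :: "complex poly"
  assumes "\<And>q. q \<noteq> z \<Longrightarrow> poly P q = 0" shows "P = 0"
proof (rule ccontr)
  assume ne: "P \<noteq> 0"
  have "UNIV - {z} \<subseteq> {q. poly P q = 0}" using assms by auto
  moreover have "infinite (UNIV - {z} :: complex set)" by (simp add: infinite_UNIV_char_0)
  ultimately show False using poly_roots_finite[OF ne] finite_subset by blast
qed

lemma slice:
  fixes a al alb :: complex
  assumes T: "\<And>q. TT a al alb n 0 q = 0" and a1: "a \<noteq> 1" and alb0: "alb \<noteq> 0" and n1: "n \<ge> 1"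
  shows "alb - al + of_nat n - a + 1 = 0"
    and "n \<ge> 2 \<Longrightarrow> alb * of_nat n + 1 + of_nat (n choose 2) - (a - 1) * of_nat n = 0"
    and "n \<ge> 3 \<Longrightarrow> alb * of_nat (n choose 2) + of_nat n + of_nat (n choose 3) - (a - 1) * of_nat (n choose 2) = 0"
proof -
  define P :: "complex poly" where "P = [:1,1:]^n"
  define SP where "SP = [:0,1:] * ([:alb,1:] * P) - [:0,1:]^(n+1) * [:al,1:] - [:1,al:] - [:-1,a-1:] * P"
  have z: "(0::complex)^n = 0" using n1 by simp
  have ev: "TT a al alb n 0 q = (a-1)*alb*(q+1)*poly SP q" for q
    unfolding TT_def SP_def P_def using n1 by (simp add: poly_power power_0_left algebra_simps)
  have "SP = 0"
  proof (rule roots_zero[where z = "-1"])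
    fix q :: complex assume "q \<noteq> -1"
    then have "q + 1 \<noteq> 0" by (metis add_eq_0_iff2 add.commute)
    then show "poly SP q = 0" using T[of q] ev[of q] a1 alb0 by simp
  qed
  then have c: "coeff SP j = 0" for j by simp
  have cs: "coeff SP (Suc j) = alb * coeff P j + (if j = 0 then 0 else coeff P (j - 1))
        - coeff ([:0,1:]^(n+1) * [:al,1:]) (Suc j) - (if j = 0 then al else 0) + coeff P (Suc j) - (a-1) * coeff P j" for j
    unfolding SP_def by (cases j) (simp_all add: algebra_simps)
  have P0: "coeff P 0 = 1" unfolding P_def using cpow[of 0 n] by simp
  have P1: "coeff P 1 = of_nat n" unfolding P_def using cpow[of 1 n] n1 by simp
  have X1: "coeff ([:0,1:]^(n+1) * [:al,1:]) (Suc j) = 0" if "j < n" for j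
    by (rule Xpow_coeff) (use that in simp)
  show "alb - al + of_nat n - a + 1 = 0"
    using c[of 1] cs[of 0] P0 P1 X1[of 0] n1 by (simp add: algebra_simps)
  show "n \<ge> 2 \<Longrightarrow> alb * of_nat n + 1 + of_nat (n choose 2) - (a - 1) * of_nat n = 0"
  proof -
    assume n2: "n \<ge> 2"
    have P2: "coeff P 2 = of_nat (n choose 2)" unfolding P_def using cpow[of 2 n] n2 by simp
    show ?thesis using c[of 2] cs[of 1] P0 P1 P2 X1[of 1] n2 by (simp add: numeral_2_eq_2 algebra_simps)
  qed
  show "n \<ge> 3 \<Longrightarrow> alb * of_nat (n choose 2) + of_nat n + of_nat (n choose 3) - (a - 1) * of_nat (n choose 2) = 0"
  proof -
    assume n3: "n \<ge> 3"
    have P2: "coeff P 2 = of_nat (n choose 2)" unfolding P_def using cpow[of 2 n] n3 by simp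
    have P3: "coeff P 3 = of_nat (n choose 3)" unfolding P_def using cpow[of 3 n] n3 by simp
    show ?thesis using c[of 3] cs[of 2] P1 P2 P3 X1[of 2] n3 by (simp add: numeral_2_eq_2 numeral_3_eq_3 algebra_simps)
  qed
qed




lemma slice1:
  fixes al alb :: complex
  assumes T: "\<And>q. TT1 al alb n 0 q = 0" and alb0: "alb \<noteq> 0" and n1: "n \<ge> 1"
  shows "alb - al + of_nat n + 1 = 0"
    and "n \<ge> 2 \<Longrightarrow> alb * of_nat n + 1 + of_nat (n choose 2) + of_nat n = 0"
    and "n \<ge> 3 \<Longrightarrow> alb * of_nat (n choose 2) + of_nat n + of_nat (n choose 3) + of_nat (n choose 2) = 0"
proof -
  define P :: "complex poly" where "P = [:1,1:]^n"
  define SP where "SP = [:0,1:] * ([:alb,1:] * P) - [:0,1:]^(n+1) * [:al,1:] - [:1,al:] + [:1,1:] * P"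
  have ev: "TT1 al alb n 0 q = alb*poly SP q" for q
    unfolding TT1_def SP_def P_def using n1 by (simp add: poly_power power_0_left algebra_simps)
  have "SP = 0"
  proof (rule roots_zero[where z = "-1"])
    fix q :: complex assume "q \<noteq> -1"
    then show "poly SP q = 0" using T[of q] ev[of q] alb0 by simp
  qed
  then have c: "coeff SP j = 0" for j by simp
  have cs: "coeff SP (Suc j) = alb * coeff P j + (if j = 0 then 0 else coeff P (j - 1))
        - coeff ([:0,1:]^(n+1) * [:al,1:]) (Suc j) - (if j = 0 then al else 0) + coeff P (Suc j) + coeff P j" for j
    unfolding SP_def by (cases j) (simp_all add: algebra_simps)
  have P0: "coeff P 0 = 1" unfolding P_def using cpow[of 0 n] by simp
  have P1: "coeff P 1 = of_nat n" unfolding P_def using cpow[of 1 n] n1 by simp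
  have X1: "coeff ([:0,1:]^(n+1) * [:al,1:]) (Suc j) = 0" if "j < n" for j
    by (rule Xpow_coeff) (use that in simp)
  show "alb - al + of_nat n + 1 = 0"
    using c[of 1] cs[of 0] P0 P1 X1[of 0] n1 by (simp add: algebra_simps)
  show "n \<ge> 2 \<Longrightarrow> alb * of_nat n + 1 + of_nat (n choose 2) + of_nat n = 0"
  proof -
    assume n2: "n \<ge> 2"
    have P2: "coeff P 2 = of_nat (n choose 2)" unfolding P_def using cpow[of 2 n] n2 by simp
    show ?thesis using c[of 2] cs[of 1] P0 P1 P2 X1[of 1] n2 by (simp add: numeral_2_eq_2 algebra_simps)
  qed
  show "n \<ge> 3 \<Longrightarrow> alb * of_nat (n choose 2) + of_nat n + of_nat (n choose 3) + of_nat (n choose 2) = 0"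
  proof -
    assume n3: "n \<ge> 3"
    have P2: "coeff P 2 = of_nat (n choose 2)" unfolding P_def using cpow[of 2 n] n3 by simp
    have P3: "coeff P 3 = of_nat (n choose 3)" unfolding P_def using cpow[of 3 n] n3 by simp
    show ?thesis using c[of 3] cs[of 2] P1 P2 P3 X1[of 2] n3 by (simp add: numeral_2_eq_2 numeral_3_eq_3 algebra_simps)
  qed
qed

lemma cubic_nat:
  fixes u :: complex
  assumes n3: "n \<ge> 3"
    and e2: "u * of_nat n + 1 + of_nat (n choose 2) = 0"
    and e3: "u * of_nat (n choose 2) + of_nat n + of_nat (n choose 3) = 0"
  shows "n = 3"
proof -
  have "of_nat n * (of_nat n - 3) * (of_nat n + 1) * (of_nat n + 2) = (0::complex)"
    using e2 e3 C2[of n] C3[of n] by algebra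
  moreover have "(of_nat n :: complex) \<noteq> 0" "(of_nat n + 1 :: complex) \<noteq> 0" "(of_nat n + 2 :: complex) \<noteq> 0"
  proof -
    show "(of_nat n :: complex) \<noteq> 0" using n3 by simp
    have "(of_nat n + 1 :: complex) = of_nat (n + 1)" by simp
    then show "(of_nat n + 1 :: complex) \<noteq> 0" by (metis add_eq_0_iff_both_eq_0 of_nat_eq_0_iff one_neq_zero)
    have "(of_nat n + 2 :: complex) = of_nat (n + 2)" by simp
    then show "(of_nat n + 2 :: complex) \<noteq> 0" by (metis add_eq_0_iff_both_eq_0 of_nat_eq_0_iff zero_neq_numeral)
  qed
  ultimately have "(of_nat n :: complex) = of_nat 3" by simp
  then show ?thesis using of_nat_eq_iff by blast
qed

lemma cancel_lin: "(c::complex) \<noteq> 0 \<Longrightarrow> c * (x - y) = 0 \<Longrightarrow> x = y" by simp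

lemma h_nonzero:
  assumes WC: "WC a b al be alb beb g" and ab: "(a, b) \<noteq> (1, 0)" and g: "g \<noteq> 0"
  shows "eval2 g 0 \<noteq> 0"
proof
  assume "eval2 g 0 = 0"
  then have "kk a b l * Gv g l x = 0" for l x using Nrel[OF WC, of l x] by (simp add: NN_def)
  then have "g = 0" using g_zero_k[OF ab] by (simp add: kk_def)
  then show False using g by simp
qed

lemma degA:
  assumes WC: "WC a b al be alb beb g" and g: "g \<noteq> 0" and a1: "a \<noteq> 1" and alb0: "alb \<noteq> 0"
    and bb: "be = beb - b"
  shows "(degree (eval2 g 0) = 0 \<and> al - alb = 1 - a)
       \<or> (degree (eval2 g 0) = 1 \<and> al - alb = 2 - a)
       \<or> (degree (eval2 g 0) = 2 \<and> al = 1 \<and> alb = a - 2)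
       \<or> (degree (eval2 g 0) = 3 \<and> al = 5/3 \<and> a = 5/3 \<and> alb = -(2/3))"
proof -
  have ab: "(a, b) \<noteq> (1, 0)" using a1 by auto
  define h where "h = eval2 g 0"
  define n where "n = degree h"
  have h0: "h \<noteq> 0" unfolding h_def by (rule h_nonzero[OF WC ab g])
  then have lc: "lead_coeff h \<noteq> 0" by simp
  have T: "TT a al alb n p q = 0" for p q
    using top_main[of a b al be alb beb h p q] Fid[OF WC] lc unfolding h_def n_def by auto
  show ?thesis
  proof (cases "n = 0")
    case True
    have "TT a al alb 0 0 1 = 0" using T True by simp
    then have "2 * (a - 1) * (alb - al) * (alb - al - a + 1) = 0" by (simp add: TT_def algebra_simps)
    then have "alb - al = 0 \<or> alb - al - a + 1 = 0" using a1 by auto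
    then have alt: "alb = al \<or> al - alb = 1 - a" by (auto simp: algebra_simps)
    have "al - alb = 1 - a"
    proof (rule ccontr)
      assume "al - alb \<noteq> 1 - a"
      then have aa: "alb = al" using alt by simp
      have hc: "h = [:coeff h 0:]" using True degree_0_id[of h] unfolding n_def by simp
      have c0: "coeff h 0 \<noteq> 0" using h0 hc by (metis pCons_0_0)
      have K: "kk a b l * Gv g l x = coeff h 0 * b" for l x
      proof -
        have pc: "poly h z = coeff h 0" for z by (subst hc) simp
        show ?thesis using Nrel[OF WC, of l x] aa bb by (simp add: NN_def h_def[symmetric] pc algebra_simps)
      qed
      have "kk a b (- b / (a - 1)) = 0" using a1 by (simp add: kk_def field_simps)
      then have "coeff h 0 * b = 0" using K[of "- b / (a - 1)" 0] by simp
      then have "b = 0" using c0 by simp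
      then have "kk a b l * Gv g l x = 0" for l x using K by simp
      then have "g = 0" using g_zero_k[OF ab] by (simp add: kk_def)
      then show False using g by simp
    qed
    then show ?thesis using True unfolding n_def h_def by simp
  next
    case False
    then have n1: "n \<ge> 1" by simp
    have T0: "TT a al alb n 0 q = 0" for q using T by simp
    note e1 = slice(1)[OF T0 a1 alb0 n1] and e2 = slice(2)[OF T0 a1 alb0 n1] and e3 = slice(3)[OF T0 a1 alb0 n1]
    consider "n = 1" | "n = 2" | "n \<ge> 3" using n1 by linarith
    then show ?thesis
    proof cases
      case 1
      then show ?thesis using e1 unfolding n_def h_def by (simp add: algebra_simps)
    next
      case 2
      have "alb * 2 + 1 + 1 - (a - 1) * 2 = 0" using e2 2 by simp
      then have "2 * (alb - (a - 2)) = 0" by (simp add: algebra_simps)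
      then have "alb = a - 2" by (rule cancel_lin[rotated]) simp
      moreover then have "al = 1" using e1 2 by (simp add: algebra_simps)
      ultimately show ?thesis using 2 unfolding n_def h_def by simp
    next
      case 3
      have "n = 3"
        by (rule cubic_nat[OF 3, where u = "alb - (a - 1)"]) (use e2 e3 3 in \<open>simp_all add: algebra_simps\<close>)
      then have "alb * 3 + 1 + 3 - (a - 1) * 3 = 0" using e2 by (simp add: choose_two)
      then have "3 * (alb - (a - 7/3)) = 0" by (simp add: algebra_simps)
      then have alb: "alb = a - 7/3" by (rule cancel_lin[rotated]) simp
      have "al = alb + 4 - a" using e1 \<open>n = 3\<close> by (simp add: algebra_simps)
      then have al: "al = 5/3" using alb by simp
      have "TT a al alb 3 1 1 = 0" using T \<open>n = 3\<close> by simp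
      then have "4 * (a - 1) * (a - 5/3) = 0" using alb al by (simp add: TT_def) algebra
      then have a53: "a = 5/3" using a1 by simp
      have "alb = -(2/3)" using alb a53 by simp
      then show ?thesis using \<open>n = 3\<close> a53 al unfolding n_def h_def by simp
    qed
  qed
qed




lemma deg1:
  assumes WC: "WC a b al be alb beb g" and g: "g \<noteq> 0" and a1: "a = 1" and b0: "b \<noteq> 0" and alb0: "alb \<noteq> 0"
  shows "(degree (eval2 g 0) = 0 \<and> (al = alb \<or> al - alb = 1))
       \<or> (degree (eval2 g 0) = 1 \<and> al - alb = 2)
       \<or> (degree (eval2 g 0) = 2 \<and> al = 1 \<and> alb = -2)"
proof -
  have ab: "(a, b) \<noteq> (1, 0)" using b0 by auto
  define h where "h = eval2 g 0"
  define n where "n = degree h"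
  have h0: "h \<noteq> 0" unfolding h_def by (rule h_nonzero[OF WC ab g])
  then have lc: "lead_coeff h \<noteq> 0" by simp
  have F1: "FF1 1 b al be alb beb (poly h) x l m = 0" for x l m
    using Fid1[OF WC a1 b0] a1 unfolding h_def by simp
  have T: "TT1 al alb n p q = 0" for p q
    using top_main1[of b al be alb beb h p q] F1 lc unfolding n_def by auto
  show ?thesis
  proof (cases "n = 0")
    case True
    have "TT1 al alb 0 0 1 = 0" using T True by simp
    then have "(alb - al) * (alb - al + 1) = 0" by (simp add: TT1_def algebra_simps)
    then have "alb - al = 0 \<or> alb - al + 1 = 0" by auto
    then have "al = alb \<or> al - alb = 1" by (auto simp: algebra_simps)
    then show ?thesis using True unfolding n_def h_def by simp
  next
    case False
    then have n1: "n \<ge> 1" by simp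
    have T0: "TT1 al alb n 0 q = 0" for q using T by simp
    note e1 = slice1(1)[OF T0 alb0 n1] and e2 = slice1(2)[OF T0 alb0 n1] and e3 = slice1(3)[OF T0 alb0 n1]
    consider "n = 1" | "n = 2" | "n \<ge> 3" using n1 by linarith
    then show ?thesis
    proof cases
      case 1
      then show ?thesis using e1 unfolding n_def h_def by (simp add: algebra_simps)
    next
      case 2
      have "alb * 2 + 1 + 1 + 2 = 0" using e2 2 by simp
      then have "2 * (alb - (-2)) = 0" by (simp add: algebra_simps)
      then have alb: "alb = -2" by (rule cancel_lin[rotated]) simp
      have "al = alb + 3" using e1 2 by (simp add: algebra_simps)
      then have "al = 1" using alb by simp
      then show ?thesis using 2 alb unfolding n_def h_def by simp
    next
      case 3
      have "n = 3"
        by (rule cubic_nat[OF 3, where u = "alb + 1"]) (use e2 e3 3 in \<open>simp_all add: algebra_simps\<close>)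
      then have "alb * 3 + 1 + 3 + 3 = 0" using e2 by (simp add: choose_two)
      then have "3 * (alb - (-7/3)) = 0" by (simp add: algebra_simps)
      then have alb: "alb = -7/3" by (rule cancel_lin[rotated]) simp
      have "al = alb + 4" using e1 \<open>n = 3\<close> by (simp add: algebra_simps)
      then have al: "al = 5/3" using alb by simp
      have "TT1 al alb 3 1 1 = 0" using T \<open>n = 3\<close> by simp
      then show ?thesis using alb al by (simp add: TT1_def)
    qed
  qed
qed




lemma WC_scale: assumes "WC a b al be alb beb g" shows "WC a b al be alb beb (cc c * g)"
  unfolding WC_def
proof (intro allI)
  fix x l m
  have "(x + alb*l + beb) * Gv g m (x + l) - (x + m + al*l + be) * Gv g m x
          = ((a - 1)*l - m + b) * Gv g (l + m) x" using assms unfolding WC_def by blast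
  then show "(x + alb*l + beb) * Gv (cc c * g) m (x + l) - (x + m + al*l + be) * Gv (cc c * g) m x
          = ((a - 1)*l - m + b) * Gv (cc c * g) (l + m) x" by simp algebra
qed

lemma WC_lin: assumes "WC a b al be alb beb g1" "WC a b al be alb beb g2"
  shows "WC a b al be alb beb (g1 - cc c * g2)"
  unfolding WC_def
proof (intro allI)
  fix x l m
  have "(x + alb*l + beb) * Gv g1 m (x + l) - (x + m + al*l + be) * Gv g1 m x
          = ((a - 1)*l - m + b) * Gv g1 (l + m) x" using assms unfolding WC_def by blast
  moreover have "(x + alb*l + beb) * Gv g2 m (x + l) - (x + m + al*l + be) * Gv g2 m x
          = ((a - 1)*l - m + b) * Gv g2 (l + m) x" using assms unfolding WC_def by blast
  ultimately show "(x + alb*l + beb) * Gv (g1 - cc c * g2) m (x + l) - (x + m + al*l + be) * Gv (g1 - cc c * g2) m x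
          = ((a - 1)*l - m + b) * Gv (g1 - cc c * g2) (l + m) x" by simp algebra
qed

lemma V_const: "al - alb = 1 - a \<Longrightarrow> be = beb - b \<Longrightarrow> WC a b al be alb beb (cc c)"
  unfolding WC_def by simp algebra




lemma V2b:
  assumes a1: "a \<noteq> 1" and h1: "al - alb = 2 - a" and h2: "be = beb - b"
  shows "WC a b al be alb beb (g2b a b alb beb)"
  unfolding WC_def
proof (intro allI)
  fix x l m
  define u where "u = 1 / (1 - a)"
  have hu: "u * (1 - a) = 1" using a1 by (simp add: u_def)
  have du: "y / (1 - a) = y * u" for y by (simp add: u_def)
  show "(x + alb*l + beb) * Gv (g2b a b alb beb) m (x + l) - (x + m + al*l + be) * Gv (g2b a b alb beb) m x
          = ((a - 1)*l - m + b) * Gv (g2b a b alb beb) (l + m) x"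
    unfolding g2b_def using hu h1 h2 by (simp add: du) algebra
qed

lemma V2c:
  assumes a1: "a \<noteq> 1" and h1: "al = 1" "alb = a - 2" and h2: "be = beb - b"
  shows "WC a b al be alb beb (g2c a b alb beb)"
  unfolding WC_def
proof (intro allI)
  fix x l m
  define u where "u = 1 / (1 - a)"
  have hu: "u * (1 - a) = 1" using a1 by (simp add: u_def)
  have du: "y / (1 - a) = y * u" for y by (simp add: u_def)
  show "(x + alb*l + beb) * Gv (g2c a b alb beb) m (x + l) - (x + m + al*l + be) * Gv (g2c a b alb beb) m x
          = ((a - 1)*l - m + b) * Gv (g2c a b alb beb) (l + m) x"
    unfolding g2c_def using hu h1 h2 by (simp add: du) algebra
qed

lemma V2d:
  assumes h1: "a = 5/3" "al = 5/3" "alb = -(2/3)" and h2: "be = beb - b"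
  shows "WC a b al be alb beb (g2d b beb)"
  unfolding WC_def
proof (intro allI)
  fix x l m
  show "(x + alb*l + beb) * Gv (g2d b beb) m (x + l) - (x + m + al*l + be) * Gv (g2d b beb) m x
          = ((a - 1)*l - m + b) * Gv (g2d b beb) (l + m) x"
    unfolding g2d_def h1 h2 by simp algebra
qed

lemma V3b:
  assumes h1: "a = 1" "al - alb = 1" and h2: "be = beb - b"
  shows "WC a b al be alb beb (g3b b)"
  unfolding WC_def
proof (intro allI)
  fix x l m
  show "(x + alb*l + beb) * Gv (g3b b) m (x + l) - (x + m + al*l + be) * Gv (g3b b) m x
          = ((a - 1)*l - m + b) * Gv (g3b b) (l + m) x"
    unfolding g3b_def using h1 h2 by simp algebra
qed

lemma V3c:
  assumes h1: "a = 1" "al - alb = 2" and h2: "be = beb - b"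
  shows "WC a b al be alb beb (g3c b alb beb)"
  unfolding WC_def
proof (intro allI)
  fix x l m
  show "(x + alb*l + beb) * Gv (g3c b alb beb) m (x + l) - (x + m + al*l + be) * Gv (g3c b alb beb) m x
          = ((a - 1)*l - m + b) * Gv (g3c b alb beb) (l + m) x"
    unfolding g3c_def using h1 h2 by simp algebra
qed

lemma V3d:
  assumes h1: "a = 1" "al = 1" "alb = -2" and h2: "be = beb - b"
  shows "WC a b al be alb beb (g3d b beb)"
  unfolding WC_def
proof (intro allI)
  fix x l m
  show "(x + alb*l + beb) * Gv (g3d b beb) m (x + l) - (x + m + al*l + be) * Gv (g3d b beb) m x
          = ((a - 1)*l - m + b) * Gv (g3d b beb) (l + m) x"
    unfolding g3d_def h1 h2 by simp algebra
qed




lemma d_const: "eval2 (cc c) 0 = [:c:]" by simp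
lemma d2b: "degree (eval2 (g2b a b alb beb) 0) = 1" by (simp add: g2b_def)
lemma d2c: "degree (eval2 (g2c a b alb beb) 0) = 2" by (simp add: g2c_def power2_eq_square)
lemma d2d: "degree (eval2 (g2d b beb) 0) = 3" by (simp add: g2d_def power3_eq_cube power2_eq_square)
lemma d3b: "eval2 (g3b b) 0 = [:-b:]" by (simp add: g3b_def)
lemma d3c: "b \<noteq> 0 \<Longrightarrow> degree (eval2 (g3c b alb beb) 0) = 1" by (simp add: g3c_def power2_eq_square)
lemma d3d: "b \<noteq> 0 \<Longrightarrow> degree (eval2 (g3d b beb) 0) = 2" by (simp add: g3d_def power3_eq_cube power2_eq_square)




lemma unique:
  fixes Q :: "nat \<Rightarrow> bool"
  assumes ab: "(a, b) \<noteq> (1, 0)"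
   and all: "\<forall>g'. WC a b al be alb beb g' \<and> g' \<noteq> 0 \<longrightarrow> Q (degree (eval2 g' 0))"
   and inj: "\<forall>d. Q d \<and> Q (degree (eval2 g 0)) \<longrightarrow> d = degree (eval2 g 0)"
   and W: "WC a b al be alb beb g" and g: "g \<noteq> 0" and Ws: "WC a b al be alb beb gs"
   and ds: "degree (eval2 gs 0) = degree (eval2 g 0)" and hs: "eval2 gs 0 \<noteq> 0"
  shows "\<exists>c. c \<noteq> 0 \<and> g = cc c * gs"
proof -
  define h where "h = eval2 g 0"
  define n where "n = degree h"
  have h0: "h \<noteq> 0" unfolding h_def by (rule h_nonzero[OF W ab g])
  define c where "c = lead_coeff h / lead_coeff (eval2 gs 0)"
  have lhs: "lead_coeff (eval2 gs 0) \<noteq> 0" using hs by simp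
  have c0: "c \<noteq> 0" using h0 lhs by (simp add: c_def)
  define g' where "g' = g - cc c * gs"
  have W': "WC a b al be alb beb g'" unfolding g'_def by (rule WC_lin[OF W Ws])
  have e: "eval2 g' 0 = h - [:c:] * eval2 gs 0" by (simp add: g'_def h_def)
  have cn: "coeff (eval2 g' 0) n = 0"
    using lhs ds unfolding e n_def c_def h_def by simp
  have "g' = 0"
  proof (rule ccontr)
    assume g'0: "g' \<noteq> 0"
    have ne: "eval2 g' 0 \<noteq> 0" by (rule h_nonzero[OF W' ab g'0])
    have "Q (degree (eval2 g' 0))" using all W' g'0 by blast
    moreover have "Q n" unfolding n_def h_def using all W g by blast
    ultimately have "degree (eval2 g' 0) = n" using inj unfolding n_def h_def by blast
    then have "lead_coeff (eval2 g' 0) = 0" using cn by simp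
    then show False using ne by simp
  qed
  then have "g = cc c * gs" unfolding g'_def by simp
  then show ?thesis using c0 by blast
qed

lemma cc_one: "cc c * cc 1 = cc c" by (simp add: cc_def)

lemma classA:
  assumes a1: "a \<noteq> 1" and alb0: "alb \<noteq> 0" and bb: "be = beb - b" and g: "g \<noteq> 0"
  shows "WC a b al be alb beb g \<longleftrightarrow>
               (al - alb = 1 - a \<and> (\<exists>c. c \<noteq> 0 \<and> g = cc c))
             \<or> (al - alb = 2 - a \<and> (\<exists>c. c \<noteq> 0 \<and> g = cc c * g2b a b alb beb))
             \<or> (al = 1 \<and> alb = a - 2 \<and> (\<exists>c. c \<noteq> 0 \<and> g = cc c * g2c a b alb beb))
             \<or> (al = 5/3 \<and> a = 5/3 \<and> alb = -(2/3) \<and> (\<exists>c. c \<noteq> 0 \<and> g = cc c * g2d b beb))"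
    (is "?L \<longleftrightarrow> ?R")
proof
  assume ?R
  then show ?L
  proof (elim disjE conjE exE)
    fix c assume "al - alb = 1 - a" "g = cc c" then show ?L using V_const bb by simp
  next
    fix c assume "al - alb = 2 - a" "g = cc c * g2b a b alb beb" then show ?L using V2b[OF a1 _ bb] WC_scale by simp
  next
    fix c assume "al = 1" "alb = a - 2" "g = cc c * g2c a b alb beb" then show ?L using V2c[OF a1 _ _ bb] WC_scale by simp
  next
    fix c assume "al = 5/3" "a = 5/3" "alb = -(2/3)" "g = cc c * g2d b beb" then show ?L using V2d[OF _ _ _ bb] WC_scale by simp
  qed
next
  assume W: ?L
  have ab: "(a, b) \<noteq> (1, 0)" using a1 by auto
  define Q where "Q d \<longleftrightarrow> al - alb = of_nat d + 1 - a" for d :: nat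
  have all0: "Q (degree (eval2 g' 0))" if "WC a b al be alb beb g'" "g' \<noteq> 0" for g'
    using degA[OF that a1 alb0 bb] unfolding Q_def by (auto simp: algebra_simps)
  have inj0: "d = degree (eval2 g 0)" if "Q d" "Q (degree (eval2 g 0))" for d
    using that unfolding Q_def by simp
  have all: "\<forall>g'. WC a b al be alb beb g' \<and> g' \<noteq> 0 \<longrightarrow> Q (degree (eval2 g' 0))" using all0 by blast
  have inj: "\<forall>d. Q d \<and> Q (degree (eval2 g 0)) \<longrightarrow> d = degree (eval2 g 0)" using inj0 by blast
  note U = unique[where Q = Q, OF ab all inj W g]
  show ?R
    using degA[OF W g a1 alb0 bb]
  proof (elim disjE conjE)
    assume d: "degree (eval2 g 0) = 0" and p: "al - alb = 1 - a"
    obtain c where "c \<noteq> 0" "g = cc c * cc 1"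
      using U[OF V_const[OF p bb, of 1]] d by auto
    then show ?R using p cc_one by auto
  next
    assume d: "degree (eval2 g 0) = 1" and p: "al - alb = 2 - a"
    have ne: "eval2 (g2b a b alb beb) 0 \<noteq> 0" using d2b[of a b alb beb] by auto
    obtain c where "c \<noteq> 0" "g = cc c * g2b a b alb beb"
      using U[OF V2b[OF a1 p bb] _ ne] d d2b by auto
    then show ?R using p by auto
  next
    assume d: "degree (eval2 g 0) = 2" and p: "al = 1" "alb = a - 2"
    have ne: "eval2 (g2c a b alb beb) 0 \<noteq> 0" using d2c[of a b alb beb] by auto
    obtain c where "c \<noteq> 0" "g = cc c * g2c a b alb beb"
      using U[OF V2c[OF a1 p bb] _ ne] d d2c by auto
    then show ?R using p by auto
  next
    assume d: "degree (eval2 g 0) = 3" and p: "al = 5/3" "a = 5/3" "alb = -(2/3)"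
    have ne: "eval2 (g2d b beb) 0 \<noteq> 0" using d2d[of b beb] by auto
    obtain c where "c \<noteq> 0" "g = cc c * g2d b beb"
      using U[OF V2d[OF p(2) p(1) p(3) bb] _ ne] d d2d by auto
    then show ?R using p by auto
  qed
qed

lemma class1:
  assumes a1: "a = 1" and b0: "b \<noteq> 0" and alb0: "alb \<noteq> 0" and bb: "be = beb - b" and g: "g \<noteq> 0"
  shows "WC a b al be alb beb g \<longleftrightarrow>
               (al = alb \<and> (\<exists>c. c \<noteq> 0 \<and> g = cc c))
             \<or> (al - alb = 1 \<and> (\<exists>c. c \<noteq> 0 \<and> g = cc c * g3b b))
             \<or> (al - alb = 2 \<and> (\<exists>c. c \<noteq> 0 \<and> g = cc c * g3c b alb beb))
             \<or> (al = 1 \<and> alb = -2 \<and> (\<exists>c. c \<noteq> 0 \<and> g = cc c * g3d b beb))"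
    (is "?L \<longleftrightarrow> ?R")
proof
  assume ?R
  then show ?L
  proof (elim disjE conjE exE)
    fix c assume "al = alb" "g = cc c" then show ?L using V_const[of al alb a be beb b c] bb a1 by simp
  next
    fix c assume "al - alb = 1" "g = cc c * g3b b" then show ?L using V3b[OF a1 _ bb] WC_scale by simp
  next
    fix c assume "al - alb = 2" "g = cc c * g3c b alb beb" then show ?L using V3c[OF a1 _ bb] WC_scale by simp
  next
    fix c assume "al = 1" "alb = -2" "g = cc c * g3d b beb" then show ?L using V3d[OF a1 _ _ bb] WC_scale by simp
  qed
next
  assume W: ?L
  have ab: "(a, b) \<noteq> (1, 0)" using b0 by auto
  define Q where "Q d \<longleftrightarrow> (d = 0 \<and> (al = alb \<or> al - alb = 1)) \<or> (d \<noteq> 0 \<and> al - alb = of_nat d + 1)" for d :: nat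
  have all0: "Q (degree (eval2 g' 0))" if "WC a b al be alb beb g'" "g' \<noteq> 0" for g'
    using deg1[OF that a1 b0 alb0] unfolding Q_def by (auto simp: algebra_simps)
  have all: "\<forall>g'. WC a b al be alb beb g' \<and> g' \<noteq> 0 \<longrightarrow> Q (degree (eval2 g' 0))" using all0 by blast
  have inj0: "d = degree (eval2 g 0)" if "Q d" "Q (degree (eval2 g 0))" for d
  proof -
    have x: "(of_nat k + 1 :: complex) \<noteq> 0" for k by (metis of_nat_Suc of_nat_eq_0_iff nat.distinct(1) add.commute)
    have y: "(of_nat k + 1 :: complex) \<noteq> 1" if "k \<noteq> 0" for k using that by simp
    show ?thesis using that x y unfolding Q_def by (auto simp: algebra_simps)
  qed
  have inj: "\<forall>d. Q d \<and> Q (degree (eval2 g 0)) \<longrightarrow> d = degree (eval2 g 0)" using inj0 by blast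
  note U = unique[where Q = Q, OF ab all inj W g]
  show ?R
    using deg1[OF W g a1 b0 alb0]
  proof (elim disjE conjE)
    assume d: "degree (eval2 g 0) = 0" and p: "al = alb"
    obtain c where "c \<noteq> 0" "g = cc c * cc 1"
      using U[OF V_const[of al alb a be beb b 1]] d p bb a1 by auto
    then show ?R using p cc_one by auto
  next
    assume d: "degree (eval2 g 0) = 0" and p: "al - alb = 1"
    have ne: "eval2 (g3b b) 0 \<noteq> 0" using d3b[of b] b0 by auto
    obtain c where "c \<noteq> 0" "g = cc c * g3b b"
      using U[OF V3b[OF a1 p bb] _ ne] d d3b by auto
    then show ?R using p by auto
  next
    assume d: "degree (eval2 g 0) = 1" and p: "al - alb = 2"
    have ne: "eval2 (g3c b alb beb) 0 \<noteq> 0" using d3c[OF b0, of alb beb] by auto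
    obtain c where "c \<noteq> 0" "g = cc c * g3c b alb beb"
      using U[OF V3c[OF a1 p bb] _ ne] d d3c[OF b0] by auto
    then show ?R using p by auto
  next
    assume d: "degree (eval2 g 0) = 2" and p: "al = 1" "alb = -2"
    have ne: "eval2 (g3d b beb) 0 \<noteq> 0" using d3d[OF b0, of beb] by auto
    obtain c where "c \<noteq> 0" "g = cc c * g3d b beb"
      using U[OF V3d[OF a1 p bb] _ ne] d d3d[OF b0] by auto
    then show ?R using p by auto
  qed
qed




lemma act_W_v: "act al be alb beb f g (0,1) l (0,1) = (eval2 g l, 0)"
  by (simp add: pair_poly_eq Gv_def)

lemma nontriv:
  assumes "g \<noteq> 0" shows "\<not> ext_equiv al be alb beb 0 g 0 0"
proof
  assume "ext_equiv al be alb beb 0 g 0 0"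
  then obtain \<phi> where p0: "\<forall>p. \<phi> (p, 0) = (p, 0)"
     and c: "\<forall>x l u. \<phi> (act al be alb beb 0 g x l u) = act al be alb beb 0 0 x l (\<phi> u)"
    unfolding ext_equiv_def by blast
  have "Gv g l y = 0" for l y
  proof -
    have "(eval2 g l, 0) = act al be alb beb 0 0 (0,1) l (\<phi> (0,1))"
      using c[rule_format, of "(0,1)" l "(0,1)"] p0 by (simp add: act_W_v)
    then have "poly (fst (eval2 g l, 0::cpoly)) y = poly (fst (act al be alb beb 0 0 (0,1) l (\<phi> (0,1)))) y"
      by simp
    then show ?thesis by (simp add: Gv_def)
  qed
  then have "g = 0" by (rule g_zero_all)
  then show False using assms by simp
qed

theorem theorem3p9:
  fixes a b al be alb beb :: complex
  assumes ab: "(a, b) \<noteq> (1, 0)"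
    and al0: "al \<noteq> 0" and alb0: "alb \<noteq> 0" and bene: "be \<noteq> beb"
  shows
    "(be - beb + b \<noteq> 0 \<longrightarrow>
        (\<forall>f g. is_ext_module a b al be alb beb f g \<longrightarrow> ext_trivial al be alb beb f g))
     \<and>
     (be - beb + b = 0 \<longrightarrow>
        (\<forall>f g. is_ext_module a b al be alb beb f g \<longrightarrow>
            (\<exists>g'. is_ext_module a b al be alb beb 0 g' \<and> ext_equiv al be alb beb f g 0 g'))
      \<and> (\<forall>g. is_ext_module a b al be alb beb 0 g \<longrightarrow>
            (\<not> ext_trivial al be alb beb 0 g \<longleftrightarrow> g \<noteq> 0))
      \<and> (a \<noteq> 1 \<longrightarrow> (\<forall>g. g \<noteq> 0 \<longrightarrow>
            (is_ext_module a b al be alb beb 0 g \<longleftrightarrow>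
               (al - alb = 1 - a \<and> (\<exists>c. c \<noteq> 0 \<and> g = cc c))
             \<or> (al - alb = 2 - a \<and> (\<exists>c. c \<noteq> 0 \<and> g = cc c * g2b a b alb beb))
             \<or> (al = 1 \<and> alb = a - 2 \<and> (\<exists>c. c \<noteq> 0 \<and> g = cc c * g2c a b alb beb))
             \<or> (al = 5/3 \<and> a = 5/3 \<and> alb = -(2/3) \<and> (\<exists>c. c \<noteq> 0 \<and> g = cc c * g2d b beb)))))
      \<and> (a = 1 \<longrightarrow> (\<forall>g. g \<noteq> 0 \<longrightarrow>
            (is_ext_module a b al be alb beb 0 g \<longleftrightarrow>
               (al = alb \<and> (\<exists>c. c \<noteq> 0 \<and> g = cc c))
             \<or> (al - alb = 1 \<and> (\<exists>c. c \<noteq> 0 \<and> g = cc c * g3b b))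
             \<or> (al - alb = 2 \<and> (\<exists>c. c \<noteq> 0 \<and> g = cc c * g3c b alb beb))
             \<or> (al = 1 \<and> alb = -2 \<and> (\<exists>c. c \<noteq> 0 \<and> g = cc c * g3d b beb))))))"

proof (intro conjI impI allI)
  fix f g :: cpoly2
  assume h: "be - beb + b \<noteq> 0" and M: "is_ext_module a b al be alb beb f g"
  have LC: "LC al be alb beb f" and W: "WC a b al be alb beb g" using M by (simp_all add: char_iff)
  have "Gv g m x = 0" for m x
  proof -
    have "(x + alb*0 + beb) * Gv g m (x + 0) - (x + m + al*0 + be) * Gv g m x
          = ((a - 1)*0 - m + b) * Gv g (0 + m) x" using W unfolding WC_def by blast
    then have "(be - beb + b) * Gv g m x = 0" by (simp add: algebra_simps)
    then show ?thesis using h by simp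
  qed
  then have g0: "g = 0" by (rule g_zero_all)
  show "ext_trivial al be alb beb f g"
    unfolding ext_trivial_def g0 using cobound[OF LC bene] by blast
next
  fix f g :: cpoly2
  assume h: "be - beb + b = 0" and M: "is_ext_module a b al be alb beb f g"
  have LC: "LC al be alb beb f" and W: "WC a b al be alb beb g" using M by (simp_all add: char_iff)
  show "\<exists>g'. is_ext_module a b al be alb beb 0 g' \<and> ext_equiv al be alb beb f g 0 g'"
  proof (rule exI[of _ g], rule conjI)
    show "is_ext_module a b al be alb beb 0 g" using W by (simp add: char_iff LC_0)
    show "ext_equiv al be alb beb f g 0 g" by (rule cobound[OF LC bene])
  qed
next
  fix g :: cpoly2
  assume h: "be - beb + b = 0" and M: "is_ext_module a b al be alb beb 0 g"
  show "(\<not> ext_trivial al be alb beb 0 g) \<longleftrightarrow> g \<noteq> 0"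
  proof
    assume "\<not> ext_trivial al be alb beb 0 g"
    then show "g \<noteq> 0" unfolding ext_trivial_def using cobound[OF LC_0[of al be alb beb] bene, where g = 0] by auto
  next
    assume "g \<noteq> 0"
    then show "\<not> ext_trivial al be alb beb 0 g" unfolding ext_trivial_def by (rule nontriv)
  qed
next
  fix g :: cpoly2
  assume h: "be - beb + b = 0" and a1: "a \<noteq> 1" and g: "g \<noteq> 0"
  have bb: "be = beb - b" using h by (simp add: algebra_simps)
  show "is_ext_module a b al be alb beb 0 g \<longleftrightarrow>
               (al - alb = 1 - a \<and> (\<exists>c. c \<noteq> 0 \<and> g = cc c))
             \<or> (al - alb = 2 - a \<and> (\<exists>c. c \<noteq> 0 \<and> g = cc c * g2b a b alb beb))
             \<or> (al = 1 \<and> alb = a - 2 \<and> (\<exists>c. c \<noteq> 0 \<and> g = cc c * g2c a b alb beb))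
             \<or> (al = 5/3 \<and> a = 5/3 \<and> alb = -(2/3) \<and> (\<exists>c. c \<noteq> 0 \<and> g = cc c * g2d b beb))"
    using classA[OF a1 alb0 bb g] by (simp only: char_iff LC_0 simp_thms)
next
  fix g :: cpoly2
  assume h: "be - beb + b = 0" and a1: "a = 1" and g: "g \<noteq> 0"
  have bb: "be = beb - b" using h by (simp add: algebra_simps)
  have b0: "b \<noteq> 0" using ab a1 by auto
  show "is_ext_module a b al be alb beb 0 g \<longleftrightarrow>
               (al = alb \<and> (\<exists>c. c \<noteq> 0 \<and> g = cc c))
             \<or> (al - alb = 1 \<and> (\<exists>c. c \<noteq> 0 \<and> g = cc c * g3b b))
             \<or> (al - alb = 2 \<and> (\<exists>c. c \<noteq> 0 \<and> g = cc c * g3c b alb beb))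
             \<or> (al = 1 \<and> alb = -2 \<and> (\<exists>c. c \<noteq> 0 \<and> g = cc c * g3d b beb))"
    using class1[OF a1 b0 alb0 bb g] by (simp only: char_iff LC_0 simp_thms)
qed



end
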